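(* Let $a=(D,F)$ with $D\neq-1$, $F\neq1$, $F\neq 1/2$. In the projective coordinates $(z,w)=\big(\tfrac1v,\tfrac{1-u}{v}\big)$, the meromorphic extension of $-L_a$, where $L_a=(-v+uv)\partial_u+(u+Du^2+Fv^2)\partial_v$, is \[ \bar X_a=\frac1z\Big(z\big(F+(D+1)z^2-(2D+1)zw+Dw^2\big)\partial_z+w\big(-1+F+(D+1)z^2-(2D+1)zw+Dw^2\big)\partial_w\Big). \] Let \[ g(z,w)=\frac{D}{2(F-1)(D+1)}w^2-\frac{2D+1}{(2F-1)(D+1)}wz+\frac{1}{2(D+1)},\qquad \Psi(z,w)=\Big(\frac{z}{\sqrt{g(z,w)}},\frac{w}{\sqrt{g(z,w)}}\Big). \] Then $\Psi$ is a local analytic change of coordinates near $(z,w)=(0,0)$ with $\Psi^*X_a=(D\Psi)^{-1}(X_a\circ\Psi)=\bar X_a$, where \[ X_a=\frac{1}{xU_a(x,y)}\Big(x(x^2+2F)\partial_x+y(x^2+2F-2)\partial_y\Big),\quad U_a(x,y)=\Big(\frac{2D+1}{2(2F-1)}xy-\frac{D}{4(F-1)}y^2+\frac{D+1}{2}\Big)^{-1/2}. \] In particular, with $\mu=2$, $\varepsilon=-2F$ and $V_a(x)=2-2F-x^2$, one has $X_a=\frac{1}{xU_a(x,y)}\big(x(x^\mu-\varepsilon)\partial_x-V_a(x)y\partial_y\big)$. Moreover, for $F\neq0$, $\bar I(z,w)=\frac wz\big(1+2F\frac{g(z,w)}{z^2}\big)^{-1/(2F)}$ is a first integral of $\bar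 X_a$, and $\Psi$ transforms it into $I(x,y)=\frac yx\big(1+\frac{2F}{x^2}\big)^{-1/(2F)}$.
   Context: $L_a$ is the dehomogenized Loud family of quadratic centers with parameter $a=(D,F)\in\mathbb{R}^2$; the line at infinity corresponds to $z=0$ in the $(z,w)$ chart and to $x=0$ after the change $\Psi$. *)

theory Defs
  imports "HOL-Analysis.Analysis"
begin

definition cscale :: "complex \<Rightarrow> complex \<times> complex \<Rightarrow> complex \<times> complex" where
  "cscale c p = (c * fst p, c * snd p)"

text \<open>Holomorphy in two complex variables: complex Frechet differentiability on an open set.\<close>
definition holo2_on :: "(complex \<times> complex \<Rightarrow> complex \<times> complex) \<Rightarrow> (complex \<times> complex) set \<Rightarrow> bool" where
  "holo2_on f S \<longleftrightarrow> open S \<and> (\<forall>p\<in>S. \<exists>f'. (f has_derivative f') (at p) \<and>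
      (\<forall>c v. f' (cscale c v) = cscale c (f' v)))"

definition holo2c_on :: "(complex \<times> complex \<Rightarrow> complex) \<Rightarrow> (complex \<times> complex) set \<Rightarrow> bool" where
  "holo2c_on f S \<longleftrightarrow> open S \<and> (\<forall>p\<in>S. \<exists>f'. (f has_derivative f') (at p) \<and>
      (\<forall>c v. f' (cscale c v) = c * f' v))"

definition local_analytic_coord_change ::
  "(complex \<times> complex \<Rightarrow> complex \<times> complex) \<Rightarrow> (complex \<times> complex) set \<Rightarrow> complex \<times> complex \<Rightarrow> bool" where
  "local_analytic_coord_change \<Psi> N p0 \<longleftrightarrow> open N \<and> p0 \<in> N \<and> holo2_on \<Psi> N \<and> inj_on \<Psi> N \<and>
      open (\<Psi> ` N) \<and> holo2_on (inv_into N \<Psi>) (\<Psi> ` N)"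

definition La :: "real \<Rightarrow> real \<Rightarrow> complex \<times> complex \<Rightarrow> complex \<times> complex" where
  "La D F = (\<lambda>(u, v). (- v + u * v, u + of_real D * u\<^sup>2 + of_real F * v\<^sup>2))"

definition proj_chart :: "complex \<times> complex \<Rightarrow> complex \<times> complex" where
  "proj_chart = (\<lambda>(u, v). (1 / v, (1 - u) / v))"

definition Xbar :: "real \<Rightarrow> real \<Rightarrow> complex \<times> complex \<Rightarrow> complex \<times> complex" where
  "Xbar D F = (\<lambda>(z, w).
     ((1 / z) * (z * (of_real F + (of_real D + 1) * z\<^sup>2 - (2 * of_real D + 1) * z * w + of_real D * w\<^sup>2)),
      (1 / z) * (w * (-1 + of_real F + (of_real D + 1) * z\<^sup>2 - (2 * of_real D + 1) * z * w + of_real D * w\<^sup>2))))"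

definition gfun :: "real \<Rightarrow> real \<Rightarrow> complex \<times> complex \<Rightarrow> complex" where
  "gfun D F = (\<lambda>(z, w).
     of_real D / (2 * (of_real F - 1) * (of_real D + 1)) * w\<^sup>2
     - (2 * of_real D + 1) / ((2 * of_real F - 1) * (of_real D + 1)) * w * z
     + 1 / (2 * (of_real D + 1)))"

text \<open>Psi(z,w) = (z / sqrt g, w / sqrt g), for a chosen branch r of sqrt g.\<close>
definition Psi :: "(complex \<times> complex \<Rightarrow> complex) \<Rightarrow> complex \<times> complex \<Rightarrow> complex \<times> complex" where
  "Psi r = (\<lambda>(z, w). (z / r (z, w), w / r (z, w)))"

text \<open>U_a = hfun^(-1/2); a branch U of it is any function with U^2 * hfun = 1.\<close>
definition hfun :: "real \<Rightarrow> real \<Rightarrow> complex \<times> complex \<Rightarrow> complex" where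
  "hfun D F = (\<lambda>(x, y).
     (2 * of_real D + 1) / (2 * (2 * of_real F - 1)) * x * y
     - of_real D / (4 * (of_real F - 1)) * y\<^sup>2 + (of_real D + 1) / 2)"

definition Xa :: "real \<Rightarrow> (complex \<times> complex \<Rightarrow> complex) \<Rightarrow> complex \<times> complex \<Rightarrow> complex \<times> complex" where
  "Xa F U = (\<lambda>(x, y).
     (1 / (x * U (x, y)) * (x * (x\<^sup>2 + 2 * of_real F)),
      1 / (x * U (x, y)) * (y * (x\<^sup>2 + 2 * of_real F - 2))))"

definition Va :: "real \<Rightarrow> complex \<Rightarrow> complex" where
  "Va F x = 2 - 2 * of_real F - x\<^sup>2"

text \<open>First integrals, with the principal branch of the complex power.\<close>
definition Ibar :: "real \<Rightarrow> real \<Rightarrow> complex \<times> complex \<Rightarrow> complex" where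
  "Ibar D F = (\<lambda>(z, w). (w / z) * (1 + 2 * of_real F * gfun D F (z, w) / z\<^sup>2) powr (- 1 / (2 * of_real F)))"

definition Ifun :: "real \<Rightarrow> complex \<times> complex \<Rightarrow> complex" where
  "Ifun F = (\<lambda>(x, y). (y / x) * (1 + 2 * of_real F / x\<^sup>2) powr (- 1 / (2 * of_real F)))"

definition first_integral_on ::
  "(complex \<times> complex \<Rightarrow> complex) \<Rightarrow> (complex \<times> complex \<Rightarrow> complex \<times> complex) \<Rightarrow> (complex \<times> complex) set \<Rightarrow> bool" where
  "first_integral_on H X S \<longleftrightarrow> (\<forall>p\<in>S. \<exists>H'. (H has_derivative H') (at p) \<and> H' (X p) = 0)"

end

theory Submission
  imports Defs
begin


definition K1 :: "real \<Rightarrow> real \<Rightarrow> complex" where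
  "K1 D F = of_real D / (2 * (of_real F - 1) * (of_real D + 1))"
definition K2 :: "real \<Rightarrow> real \<Rightarrow> complex" where
  "K2 D F = (2 * of_real D + 1) / ((2 * of_real F - 1) * (of_real D + 1))"
definition K0 :: "real \<Rightarrow> complex" where
  "K0 D = 1 / (2 * (of_real D + 1))"

lemma gfun_eq: "gfun D F p = K1 D F * (snd p)\<^sup>2 - K2 D F * snd p * fst p + K0 D"
  by (cases p) (simp add: gfun_def K1_def K2_def K0_def)

definition gd :: "real \<Rightarrow> real \<Rightarrow> complex \<times> complex \<Rightarrow> complex \<times> complex \<Rightarrow> complex" where
 "gd D F p h = - K2 D F * snd p * fst h + (2 * K1 D F * snd p - K2 D F * fst p) * snd h"

lemma deriv_aux: "((\<lambda>p. (a::complex) * (snd p)\<^sup>2 - b * snd p * fst p + c) has_derivative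
   (\<lambda>h. - b * snd p * fst h + (2 * a * snd p - b * fst p) * snd h)) (at p within X)"
  by (auto intro!: derivative_eq_intros simp: fun_eq_iff algebra_simps)

lemma gfun_deriv: "(gfun D F has_derivative gd D F p) (at p within X)"
proof -
  have e: "gfun D F = (\<lambda>p. K1 D F * (snd p)\<^sup>2 - K2 D F * snd p * fst p + K0 D)"
    by (rule ext) (rule gfun_eq)
  show ?thesis unfolding e gd_def[abs_def] by (rule deriv_aux)
qed




lemma nz: assumes "D \<noteq> -1" "F \<noteq> 1" "F \<noteq> 1/2"
  shows "(of_real D + 1::complex) \<noteq> 0" "(of_real F - 1::complex) \<noteq> 0" "(2 * of_real F - 1::complex) \<noteq> 0"
proof -
  show "(of_real D + 1::complex) \<noteq> 0" using assms(1)
    by (metis add.commute add_eq_0_iff of_real_1 of_real_eq_iff of_real_minus)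
  show "(of_real F - 1::complex) \<noteq> 0" using assms(2)
    by (metis eq_iff_diff_eq_0 of_real_1 of_real_eq_iff)
  have "2 * F - 1 \<noteq> 0" using assms(3) by auto
  then show "(2 * of_real F - 1::complex) \<noteq> 0"
    by (metis of_real_1 of_real_diff of_real_eq_0_iff of_real_mult of_real_numeral)
qed

lemma key_gen:
  fixes d f P Qv R z w A :: complex
  assumes "P \<noteq> 0" "Qv \<noteq> 0" "R \<noteq> 0" "z \<noteq> 0" and e: "P = d + 1" "Qv = f - 1" "R = 2 * f - 1"
  and A: "A = f + (d + 1) * z\<^sup>2 - (2 * d + 1) * z * w + d * w\<^sup>2"
  shows "z * (- ((2 * d + 1) / (R * P)) * w * A + (2 * (d / (2 * Qv * P)) * w - ((2 * d + 1) / (R * P)) * z) * (w * (A - 1) / z))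
     = 2 * (d / (2 * Qv * P) * w\<^sup>2 - (2 * d + 1) / (R * P) * w * z + 1 / (2 * P)) * A - z\<^sup>2
       - 2 * f * (d / (2 * Qv * P) * w\<^sup>2 - (2 * d + 1) / (R * P) * w * z + 1 / (2 * P))"
proof -
  have d: "d = P - 1" and f: "f = Qv + 1" and R: "R = 2 * Qv + 1" using e by auto
  show ?thesis using assms(1-4) unfolding A
    apply (simp add: field_simps)
    apply (simp add: d f R)
    apply algebra
    done
qed

lemma key: assumes "D \<noteq> -1" "F \<noteq> 1" "F \<noteq> 1/2" "z \<noteq> 0"
  and A: "A = of_real F + (of_real D + 1) * z\<^sup>2 - (2 * of_real D + 1) * z * w + of_real D * w\<^sup>2"
  shows "z * gd D F (z, w) (A, w * (A - 1) / z) = 2 * gfun D F (z,w) * A - z\<^sup>2 - 2 * of_real F * gfun D F (z,w)"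
  using key_gen[OF nz[OF assms(1-3)] assms(4) refl refl refl A]
  unfolding gd_def gfun_eq K0_def K1_def K2_def by simp

lemma euler: "gd D F p p = 2 * (gfun D F p - K0 D)"
  unfolding gd_def gfun_eq by (simp add: algebra_simps power2_eq_square)

lemma H1_gen:
  fixes d f P Qv R z w \<rho> :: complex
  assumes "P \<noteq> 0" "Qv \<noteq> 0" "R \<noteq> 0" "\<rho> \<noteq> 0" and e: "P = d + 1" "Qv = f - 1" "R = 2 * f - 1"
  shows "((2 * d + 1) / (2 * R) * (z/\<rho>) * (w/\<rho>) - d / (4 * Qv) * (w/\<rho>)\<^sup>2 + P / 2) * (4 * \<rho>\<^sup>2)
     = 2 * P * (\<rho>\<^sup>2 - (d / (2 * Qv * P) * w\<^sup>2 - (2 * d + 1) / (R * P) * w * z + 1 / (2 * P))) + 1"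
proof -
  have d: "d = P - 1" and f: "f = Qv + 1" and R: "R = 2 * Qv + 1" using e by auto
  show ?thesis using assms(1-4)
    apply (simp add: field_simps)
    apply (simp add: d f R)
    apply algebra
    done
qed

lemma H1: assumes "D \<noteq> -1" "F \<noteq> 1" "F \<noteq> 1/2" "\<rho> \<noteq> 0"
  shows "hfun D F (z/\<rho>, w/\<rho>) * (4 * \<rho>\<^sup>2) = 2 * (of_real D + 1) * (\<rho>\<^sup>2 - gfun D F (z,w)) + 1"
  unfolding hfun_def prod.case gfun_eq fst_conv snd_conv K0_def K1_def K2_def
  by (rule H1_gen[OF nz[OF assms(1-3)] assms(4) refl refl refl])

lemma H2_gen:
  fixes d f P Qv R x y u :: complex
  assumes "P \<noteq> 0" "Qv \<noteq> 0" "R \<noteq> 0" and e: "P = d + 1" "Qv = f - 1" "R = 2 * f - 1"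
  shows "(d / (2 * Qv * P) * (y * u / 2)\<^sup>2 - (2 * d + 1) / (R * P) * (y * u / 2) * (x * u / 2) + 1 / (2 * P)) - u\<^sup>2 / 4
     = - (1 / (2 * P)) * (u\<^sup>2 * ((2 * d + 1) / (2 * R) * x * y - d / (4 * Qv) * y\<^sup>2 + P / 2) - 1)"
proof -
  have d: "d = P - 1" and f: "f = Qv + 1" and R: "R = 2 * Qv + 1" using e by auto
  show ?thesis using assms(1-3)
    apply (simp add: field_simps)
    apply (simp add: d f R)
    apply algebra
    done
qed

lemma H2: assumes "D \<noteq> -1" "F \<noteq> 1" "F \<noteq> 1/2"
  shows "gfun D F (x * u / 2, y * u / 2) - u\<^sup>2 / 4 = - K0 D * (u\<^sup>2 * hfun D F (x, y) - 1)"
  unfolding hfun_def prod.case gfun_eq fst_conv snd_conv K0_def K1_def K2_def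
  by (rule H2_gen[OF nz[OF assms(1-3)] refl refl refl])




lemma proj_chart_eq: "proj_chart = (\<lambda>p. (1 / snd p, (1 - fst p) / snd p))"
  by (auto simp: proj_chart_def fun_eq_iff split: prod.split)

lemma part1: assumes "v \<noteq> 0"
  shows "\<exists>\<phi>'. (proj_chart has_derivative \<phi>') (at (u, v)) \<and>
              \<phi>' (- La D F (u, v)) = Xbar D F (proj_chart (u, v))"
proof (intro exI conjI)
  show "(proj_chart has_derivative (\<lambda>h. (- snd h / (v * v), (- fst h * v - (1 - u) * snd h) / (v * v)))) (at (u, v))"
    unfolding proj_chart_eq using assms
    by (auto intro!: derivative_eq_intros simp: fun_eq_iff field_simps)
  show "(\<lambda>h. (- snd h / (v * v), (- fst h * v - (1 - u) * snd h) / (v * v))) (- La D F (u, v)) = Xbar D F (proj_chart (u, v))"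
    using assms unfolding La_def Xbar_def proj_chart_def
    apply (simp add: field_simps)
    apply algebra
    done
qed

lemma part3: "let \<mu> = (2::nat); \<epsilon> = - 2 * complex_of_real F in
          \<forall>V x y. Xa F V (x, y) =
            (1 / (x * V (x, y)) * (x * (x ^ \<mu> - \<epsilon>)),
             1 / (x * V (x, y)) * (- (Va F x * y)))"
  by (simp add: Xa_def Va_def algebra_simps)




lemma Bf_deriv: assumes "fst p \<noteq> 0"
  shows "((\<lambda>p. 1 + 2 * of_real F * gfun D F p / (fst p)\<^sup>2) has_derivative
     (\<lambda>h. 2 * of_real F * (gd D F p h * fst p - 2 * gfun D F p * fst h) / (fst p)^3)) (at p)"
  using assms
  by (auto intro!: derivative_eq_intros gfun_deriv simp: fun_eq_iff field_simps power2_eq_square power3_eq_cube)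

lemma alg4:
  fixes z w A G g f P :: complex
  assumes "z \<noteq> 0" "f \<noteq> 0" "z\<^sup>2 + 2 * f * g \<noteq> 0"
    and K: "z * G = 2 * g * A - z\<^sup>2 - 2 * f * g"
  shows "(w * (A - 1) / z * z - w * A) / (z * z) * P
     + (w / z) * ((-1 / (2 * f)) * (P / (1 + 2 * f * g / z\<^sup>2)) * (2 * f * (G * z - 2 * g * A) / z^3)) = 0"
proof -
  define s where "s = z\<^sup>2 + 2 * f * g"
  have s0: "s \<noteq> 0" using assms(3) by (simp add: s_def)
  have G: "G * z - 2 * g * A = - s" using K by (simp add: s_def algebra_simps)
  have B: "1 + 2 * f * g / z\<^sup>2 = s / z\<^sup>2" using assms(1) by (simp add: field_simps s_def)
  have 1: "(-1 / (2 * f)) * (P / (s / z\<^sup>2)) * (2 * f * (- s) / z^3) = P / z"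
    using assms(1,2) s0 by (simp add: field_simps power2_eq_square power3_eq_cube)
  show ?thesis unfolding G B 1 using assms(1)
    by (simp add: field_simps power2_eq_square)
qed


lemma Xbar_eq: assumes "z \<noteq> 0"
  shows "Xbar D F (z, w) = (of_real F + (of_real D + 1) * z\<^sup>2 - (2 * of_real D + 1) * z * w + of_real D * w\<^sup>2,
     w * ((of_real F + (of_real D + 1) * z\<^sup>2 - (2 * of_real D + 1) * z * w + of_real D * w\<^sup>2) - 1) / z)"
  using assms by (simp add: Xbar_def field_simps)

lemma key_X: assumes "D \<noteq> -1" "F \<noteq> 1" "F \<noteq> 1/2" "z \<noteq> 0"
  shows "z * gd D F (z, w) (Xbar D F (z, w)) = 2 * gfun D F (z,w) * fst (Xbar D F (z, w)) - z\<^sup>2 - 2 * of_real F * gfun D F (z,w)"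
  unfolding Xbar_eq[OF assms(4)] fst_conv by (rule key[OF assms refl])

lemma Ibar_eq: "Ibar D F = (\<lambda>p. (snd p / fst p) * (1 + 2 * of_real F * gfun D F p / (fst p)\<^sup>2) powr (- 1 / (2 * of_real F)))"
  by (auto simp: Ibar_def fun_eq_iff split: prod.split)

lemma part4: assumes "D \<noteq> -1" "F \<noteq> 1" "F \<noteq> 1/2" "F \<noteq> 0"
  shows "first_integral_on (Ibar D F) (Xbar D F)
            {p. fst p \<noteq> 0 \<and>
                (1 + 2 * of_real F * gfun D F p / (fst p)\<^sup>2) \<notin> {t. t \<in> \<real> \<and> Re t \<le> 0}}"
  unfolding first_integral_on_def
proof (intro ballI)
  fix p assume "p \<in> {p. fst p \<noteq> 0 \<and>
                (1 + 2 * of_real F * gfun D F p / (fst p)\<^sup>2) \<notin> {t. t \<in> \<real> \<and> Re t \<le> 0}}"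
  then have z0: "fst p \<noteq> 0" and Bn: "(1 + 2 * of_real F * gfun D F p / (fst p)\<^sup>2) \<notin> {t. t \<in> \<real> \<and> Re t \<le> 0}"
    by auto
  obtain z w where p: "p = (z, w)" by (cases p)
  define B0 where "B0 = 1 + 2 * of_real F * gfun D F p / (fst p)\<^sup>2"
  define a where "a = - 1 / (2 * (of_real F :: complex))"
  have Bnp: "B0 \<notin> \<real>\<^sub>\<le>\<^sub>0" using Bn unfolding B0_def
    by (auto simp: complex_nonpos_Reals_iff complex_is_Real_iff)
  then have B00: "B0 \<noteq> 0" by auto
  have Bnp': "1 + 2 * of_real F * gfun D F p / (fst p)\<^sup>2 \<notin> \<real>\<^sub>\<le>\<^sub>0" using Bnp B0_def by simp
  have f0: "(of_real F :: complex) \<noteq> 0" using assms(4) by simp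
  have d1: "((\<lambda>p. snd p / fst p) has_derivative (\<lambda>h. (snd h * fst p - snd p * fst h) / (fst p * fst p))) (at p)"
    using z0 by (auto intro!: derivative_eq_intros)
  have d2: "((\<lambda>p. (1 + 2 * of_real F * gfun D F p / (fst p)\<^sup>2) powr a) has_derivative
      (\<lambda>h. (a * B0 powr (a - 1)) * (2 * of_real F * (gd D F p h * fst p - 2 * gfun D F p * fst h) / (fst p)^3))) (at p)"
    using has_derivative_compose[OF Bf_deriv[OF z0] has_field_derivative_imp_has_derivative[OF has_field_derivative_powr[OF Bnp', of a]]]
    unfolding B0_def[symmetric] .
  have d: "(Ibar D F has_derivative (\<lambda>h. snd p / fst p * ((a * B0 powr (a - 1)) * (2 * of_real F * (gd D F p h * fst p - 2 * gfun D F p * fst h) / (fst p)^3))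
       + (snd h * fst p - snd p * fst h) / (fst p * fst p) * B0 powr a)) (at p)"
    unfolding Ibar_eq a_def[symmetric] using has_derivative_mult[OF d1 d2] unfolding B0_def .
  have pw: "B0 powr (a - 1) = B0 powr a / B0" using powr_diff[of B0 a 1] by simp
  have s0: "z\<^sup>2 + 2 * of_real F * gfun D F (z,w) \<noteq> 0"
  proof
    assume "z\<^sup>2 + 2 * of_real F * gfun D F (z,w) = 0"
    then have "B0 = 0" unfolding B0_def p using z0 p by (simp add: field_simps)
    with B00 show False by simp
  qed
  define A where "A = fst (Xbar D F p)"
  define Gx where "Gx = gd D F p (Xbar D F p)"
  define g0 where "g0 = gfun D F p"
  define P where "P = B0 powr a"
  have X: "Xbar D F p = (A, w * (A - 1) / z)"
    using Xbar_eq[of z D F w] z0 p unfolding A_def by simp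
  have zz: "fst p = z" "snd p = w" using p by auto
  have K: "z * Gx = 2 * g0 * A - z\<^sup>2 - 2 * of_real F * g0"
    using key_X[OF assms(1-3), of z w] z0 unfolding Gx_def g0_def A_def p by simp
  have s0': "z\<^sup>2 + 2 * of_real F * g0 \<noteq> 0" using s0 unfolding g0_def p .
  have B0e: "B0 = 1 + 2 * of_real F * g0 / z\<^sup>2" unfolding B0_def g0_def zz ..
  have al: "(w * (A - 1) / z * z - w * A) / (z * z) * P
     + (w / z) * (a * (P / B0) * (2 * of_real F * (Gx * z - 2 * g0 * A) / z^3)) = 0"
    using alg4[OF _ f0 s0' K, of w P] z0 unfolding B0e a_def zz by simp
  have "snd p / fst p * ((a * B0 powr (a - 1)) * (2 * of_real F * (gd D F p (Xbar D F p) * fst p - 2 * gfun D F p * fst (Xbar D F p)) / (fst p)^3))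
       + (snd (Xbar D F p) * fst p - snd p * fst (Xbar D F p)) / (fst p * fst p) * B0 powr a = 0"
    unfolding pw P_def[symmetric] Gx_def[symmetric] g0_def[symmetric] A_def[symmetric] zz
    using al unfolding X snd_conv by (simp only: mult.assoc add.commute)
  with d show "\<exists>H'. (Ibar D F has_derivative H') (at p) \<and> H' (Xbar D F p) = 0" by blast
qed




lemma holo_cont: "holo2c_on f S \<Longrightarrow> continuous_on S f"
  unfolding holo2c_on_def
  by (metis continuous_at_imp_continuous_on has_derivative_continuous)

lemma Psi_eq: "Psi r = (\<lambda>p. (fst p / r p, snd p / r p))"
  by (auto simp: Psi_def fun_eq_iff split: prod.split)

lemma Psi_deriv: assumes "(r has_derivative r') (at p)" "r p \<noteq> 0"
  shows "(Psi r has_derivative (\<lambda>h. ((fst h * r p - fst p * r' h) / (r p * r p), (snd h * r p - snd p * r' h) / (r p * r p)))) (at p)"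
  unfolding Psi_eq using assms
  by (auto intro!: derivative_eq_intros)

lemma Phi_deriv: fixes U :: "complex \<times> complex \<Rightarrow> complex" assumes "(U has_derivative U') (at q)"
  shows "((\<lambda>q. (fst q * U q / 2, snd q * U q / 2)) has_derivative (\<lambda>h. ((fst h * U q + fst q * U' h) / 2, (snd h * U q + snd q * U' h) / 2))) (at q)"
  using assms
  by (auto intro!: derivative_eq_intros simp: algebra_simps)

lemma pull_alg:
  fixes z w \<rho> A G f :: complex
  assumes "z \<noteq> 0" "\<rho> \<noteq> 0" and K: "z * G = 2 * \<rho>\<^sup>2 * A - z\<^sup>2 - 2 * f * \<rho>\<^sup>2"
  shows "(A * \<rho> - z * (G / (2 * \<rho>))) / (\<rho> * \<rho>) = 1 / ((z / \<rho>) * (2 * \<rho>)) * ((z / \<rho>) * ((z / \<rho>)\<^sup>2 + 2 * f))"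
    and "(w * (A - 1) / z * \<rho> - w * (G / (2 * \<rho>))) / (\<rho> * \<rho>) = 1 / ((z / \<rho>) * (2 * \<rho>)) * ((w / \<rho>) * ((z / \<rho>)\<^sup>2 + 2 * f - 2))"
proof -
  have G: "G = (2 * \<rho>\<^sup>2 * A - z\<^sup>2 - 2 * f * \<rho>\<^sup>2) / z" using K assms(1) by (simp add: field_simps)
  show "(A * \<rho> - z * (G / (2 * \<rho>))) / (\<rho> * \<rho>) = 1 / ((z / \<rho>) * (2 * \<rho>)) * ((z / \<rho>) * ((z / \<rho>)\<^sup>2 + 2 * f))"
    unfolding G using assms(1,2) by (simp add: field_simps power2_eq_square power3_eq_cube)
  show "(w * (A - 1) / z * \<rho> - w * (G / (2 * \<rho>))) / (\<rho> * \<rho>) = 1 / ((z / \<rho>) * (2 * \<rho>)) * ((w / \<rho>) * ((z / \<rho>)\<^sup>2 + 2 * f - 2))"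
    unfolding G using assms(1,2) by (simp add: field_simps power2_eq_square power3_eq_cube)
qed




lemma sqr_cases: fixes a b :: complex shows "a\<^sup>2 = b\<^sup>2 \<Longrightarrow> a = b \<or> a = - b"
  by (simp add: power2_eq_iff)

lemma r0_nz: assumes "D \<noteq> -1" "F \<noteq> 1" "F \<noteq> 1/2" "(r0::complex)\<^sup>2 = gfun D F (0, 0)"
  shows "r0 \<noteq> 0"
proof
  assume "r0 = 0"
  then have "gfun D F (0,0) = 0" using assms(4) by simp
  moreover have "gfun D F (0,0) = 1 / (2 * (of_real D + 1))" by (simp add: gfun_def)
  moreover have "(1::complex) / (2 * (of_real D + 1)) \<noteq> 0" using nz(1)[OF assms(1-3)]
    by (metis divide_eq_0_iff mult_eq_0_iff one_neq_zero zero_neq_numeral)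
  ultimately show False by simp
qed

lemma A_set:
  fixes D F :: real and r U :: "complex \<times> complex \<Rightarrow> complex" and S T
  assumes hD: "D \<noteq> -1" and hF1: "F \<noteq> 1" and hF2: "F \<noteq> 1/2"
    and r_holo: "holo2c_on r S" and r_0: "(0, 0) \<in> S"
    and r_sqrt: "\<forall>p\<in>S. (r p)\<^sup>2 = gfun D F p"
    and U_holo: "holo2c_on U T" and U_0: "(0, 0) \<in> T"
    and U_branch: "\<forall>q\<in>T. (U q)\<^sup>2 * hfun D F q = 1"
    and U_r: "U (0, 0) = 2 * r (0, 0)"
  obtains A where "open A" "(0,0) \<in> A" "A \<subseteq> S"
    "\<And>p. p \<in> A \<Longrightarrow> r p \<noteq> 0 \<and> Psi r p \<in> T \<and> U (Psi r p) = 2 * r p"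
proof -
  define r0 where "r0 = r (0,0)"
  have r00: "r0 \<noteq> 0" using r0_nz[OF hD hF1 hF2] r_sqrt r_0 unfolding r0_def by blast
  have oS: "open S" and oT: "open T" using r_holo U_holo by (auto simp: holo2c_on_def)
  have cr: "continuous_on S r" by (rule holo_cont[OF r_holo])
  have cU: "continuous_on T U" by (rule holo_cont[OF U_holo])
  define S1 where "S1 = r -` (- {0}) \<inter> S"
  have oS1: "open S1" using cr oS unfolding S1_def continuous_on_open_vimage[OF oS] by auto
  have cP: "continuous_on S1 (Psi r)" unfolding Psi_eq
    by (auto intro!: continuous_intros continuous_on_subset[OF cr] simp: S1_def)
  define S2 where "S2 = Psi r -` T \<inter> S1"
  have oS2: "open S2" using cP oT unfolding S2_def continuous_on_open_vimage[OF oS1] by auto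
  have cUP: "continuous_on S2 (\<lambda>p. U (Psi r p))"
    by (rule continuous_on_compose2[OF cU continuous_on_subset[OF cP]]) (auto simp: S2_def)
  define S3 where "S3 = r -` ball r0 (norm r0 / 2) \<inter> S2"
  have oS3: "open S3" using continuous_on_subset[OF cr, of S2] oS2 unfolding S3_def continuous_on_open_vimage[OF oS2]
    by (auto simp: S2_def S1_def)
  have cd: "continuous_on S3 (\<lambda>p. U (Psi r p) - 2 * r p)"
    by (intro continuous_intros continuous_on_subset[OF cUP] continuous_on_subset[OF cr]) (auto simp: S3_def S2_def S1_def)
  define A where "A = (\<lambda>p. U (Psi r p) - 2 * r p) -` ball 0 (norm r0) \<inter> S3"
  have oA: "open A" using cd oS3 unfolding A_def continuous_on_open_vimage[OF oS3] by auto
  have P0: "Psi r (0,0) = (0,0)" by (simp add: Psi_def)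
  have A0: "(0,0) \<in> A" using r00 r_0 U_0 P0 U_r unfolding A_def S3_def S2_def S1_def r0_def by auto
  have AS: "A \<subseteq> S" by (auto simp: A_def S3_def S2_def S1_def)
  have Aprop: "r p \<noteq> 0 \<and> Psi r p \<in> T \<and> U (Psi r p) = 2 * r p" if pA: "p \<in> A" for p
  proof -
    obtain z w where p: "p = (z, w)" by (cases p)
    have rp: "r p \<noteq> 0" and pS: "p \<in> S" and PT: "Psi r p \<in> T"
      and d1: "dist r0 (r p) < norm r0 / 2" and d2: "norm (U (Psi r p) - 2 * r p) < norm r0"
      using pA by (auto simp: A_def S3_def S2_def S1_def)
    have Pp: "Psi r p = (z / r p, w / r p)" by (simp add: Psi_def p)
    have h1: "hfun D F (z / r p, w / r p) * (4 * (r p)\<^sup>2) = 1"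
      using H1[OF hD hF1 hF2 rp, of z w] r_sqrt pS p by simp
    have "(U (Psi r p))\<^sup>2 * hfun D F (Psi r p) = 1" using U_branch PT by blast
    then have "(U (Psi r p))\<^sup>2 = 4 * (r p)\<^sup>2" using h1 unfolding Pp
      by (metis mult.commute mult_cancel_left2 mult.assoc mult_1_right)
    then have "(U (Psi r p))\<^sup>2 = (2 * r p)\<^sup>2" by (simp add: power_mult_distrib)
    then have c: "U (Psi r p) = 2 * r p \<or> U (Psi r p) = - (2 * r p)" by (rule sqr_cases)
    have nr: "norm (r p) > norm r0 / 2"
      using d1 norm_triangle_ineq2[of r0 "r p"] by (simp add: dist_norm)
    have "U (Psi r p) = 2 * r p"
    proof (rule ccontr)
      assume "U (Psi r p) \<noteq> 2 * r p"
      with c have e: "U (Psi r p) - 2 * r p = - (4 * r p)" by auto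
      have "norm (U (Psi r p) - 2 * r p) = 4 * norm (r p)" unfolding e norm_minus_cancel norm_mult by simp
      with d2 nr norm_ge_zero[of "r p"] show False by linarith
    qed
    with rp PT show ?thesis by blast
  qed
  show ?thesis using that[OF oA A0 AS Aprop] by blast
qed


lemma B_set:
  fixes D F :: real and r U :: "complex \<times> complex \<Rightarrow> complex" and S T
  assumes hD: "D \<noteq> -1" and hF1: "F \<noteq> 1" and hF2: "F \<noteq> 1/2"
    and r_holo: "holo2c_on r S" and r_0: "(0, 0) \<in> S"
    and r_sqrt: "\<forall>p\<in>S. (r p)\<^sup>2 = gfun D F p"
    and U_holo: "holo2c_on U T" and U_0: "(0, 0) \<in> T"
    and U_branch: "\<forall>q\<in>T. (U q)\<^sup>2 * hfun D F q = 1"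
    and U_r: "U (0, 0) = 2 * r (0, 0)"
  obtains B where "open B" "(0,0) \<in> B" "B \<subseteq> T"
    "\<And>q. q \<in> B \<Longrightarrow> U q \<noteq> 0 \<and> (fst q * U q / 2, snd q * U q / 2) \<in> S \<and> r (fst q * U q / 2, snd q * U q / 2) = U q / 2"
proof -
  define u0 where "u0 = U (0,0)"
  have u00: "u0 \<noteq> 0" using r0_nz[OF hD hF1 hF2] r_sqrt r_0 U_r unfolding u0_def by auto
  have oS: "open S" and oT: "open T" using r_holo U_holo by (auto simp: holo2c_on_def)
  have cr: "continuous_on S r" by (rule holo_cont[OF r_holo])
  have cU: "continuous_on T U" by (rule holo_cont[OF U_holo])
  define Phi where "Phi = (\<lambda>q::complex\<times>complex. (fst q * U q / 2, snd q * U q / 2))"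
  define B1 where "B1 = U -` ball u0 (norm u0 / 2) \<inter> T"
  have oB1: "open B1" using cU oT unfolding B1_def continuous_on_open_vimage[OF oT] by auto
  have cP: "continuous_on T Phi" unfolding Phi_def
    by (auto intro!: continuous_intros cU)
  define B2 where "B2 = Phi -` S \<inter> B1"
  have oB2: "open B2" using continuous_on_subset[OF cP, of B1] oS unfolding B2_def continuous_on_open_vimage[OF oB1]
    by (auto simp: B1_def)
  have crP: "continuous_on B2 (\<lambda>q. r (Phi q))"
    by (rule continuous_on_compose2[OF cr continuous_on_subset[OF cP]]) (auto simp: B2_def B1_def)
  have cd: "continuous_on B2 (\<lambda>q. r (Phi q) - U q / 2)"
    by (intro continuous_intros crP continuous_on_subset[OF cU]) (auto simp: B2_def B1_def)
  define B where "B = (\<lambda>q. r (Phi q) - U q / 2) -` ball 0 (norm u0 / 4) \<inter> B2"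
  have oB: "open B" using cd oB2 unfolding B_def continuous_on_open_vimage[OF oB2] by auto
  have P0: "Phi (0,0) = (0,0)" by (simp add: Phi_def)
  have B0: "(0,0) \<in> B" using u00 r_0 U_0 P0 U_r unfolding B_def B2_def B1_def u0_def by auto
  have BT: "B \<subseteq> T" by (auto simp: B_def B2_def B1_def)
  have Bprop: "U q \<noteq> 0 \<and> Phi q \<in> S \<and> r (Phi q) = U q / 2" if qB: "q \<in> B" for q
  proof -
    obtain x y where q: "q = (x, y)" by (cases q)
    have qT: "q \<in> T" and PS: "Phi q \<in> S"
      and d1: "dist u0 (U q) < norm u0 / 2" and d2: "norm (r (Phi q) - U q / 2) < norm u0 / 4"
      using qB by (auto simp: B_def B2_def B1_def)
    have nU: "norm (U q) > norm u0 / 2"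
      using d1 norm_triangle_ineq2[of u0 "U q"] by (simp add: dist_norm)
    then have U0: "U q \<noteq> 0" using norm_ge_zero[of u0] by auto
    have Pq: "Phi q = (x * U q / 2, y * U q / 2)" by (simp add: Phi_def q)
    have "gfun D F (Phi q) - (U q)\<^sup>2 / 4 = 0"
      unfolding Pq H2[OF hD hF1 hF2] using U_branch qT q by simp
    then have "(r (Phi q))\<^sup>2 = (U q / 2)\<^sup>2" using r_sqrt PS by (simp add: power_divide)
    then have c: "r (Phi q) = U q / 2 \<or> r (Phi q) = - (U q / 2)" by (rule sqr_cases)
    have "r (Phi q) = U q / 2"
    proof (rule ccontr)
      assume "r (Phi q) \<noteq> U q / 2"
      with c have e: "r (Phi q) - U q / 2 = - U q" by auto
      have "norm (r (Phi q) - U q / 2) = norm (U q)" unfolding e norm_minus_cancel by simp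
      with d2 nU norm_ge_zero[of u0] show False by linarith
    qed
    with U0 PS show ?thesis by blast
  qed
  show ?thesis using that[OF oB B0 BT] Bprop unfolding Phi_def by blast
qed




lemma K0_nz: fixes D F :: real assumes "D \<noteq> -1" "F \<noteq> 1" "F \<noteq> 1/2" shows "K0 D \<noteq> 0"
  unfolding K0_def using nz(1)[OF assms]
  by (metis divide_eq_0_iff mult_eq_0_iff one_neq_zero zero_neq_numeral)

lemma gd_scale: "gd D F p (c * a, c * b) = c * gd D F p (a, b)"
  unfolding gd_def by (simp add: algebra_simps)

lemma r_deriv_id:
  assumes "open S" "p \<in> S" "\<forall>p\<in>S. (r p)\<^sup>2 = gfun D F p" "(r has_derivative r') (at p)" "r p \<noteq> 0"
  shows "r' h = gd D F p h / (2 * r p)"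
proof -
  have "((\<lambda>p. (r p)^2) has_derivative (\<lambda>y. of_nat 2 * r' y * r p ^ (2 - 1))) (at p)"
    by (rule has_derivative_power[OF assms(4)])
  then have "(gfun D F has_derivative (\<lambda>y. of_nat 2 * r' y * r p ^ (2 - 1))) (at p)"
    by (rule has_derivative_transform_within_open[OF _ assms(1,2)]) (use assms(3) in auto)
  then have "(\<lambda>y. of_nat 2 * r' y * r p ^ (2 - 1)) = gd D F p"
    using has_derivative_unique gfun_deriv by blast
  then have "2 * r' h * r p = gd D F p h" by (metis numeral_1_eq_Suc_0 of_nat_numeral power_one_right diff_Suc_1 numeral_2_eq_2 power_Suc0_right)
  then show ?thesis using assms(5) by (simp add: field_simps)
qed

lemma bij_lem:
  fixes L :: "complex \<times> complex \<Rightarrow> complex \<times> complex"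
  assumes hD: "D \<noteq> -1" and hF1: "F \<noteq> 1" and hF2: "F \<noteq> 1/2"
    and lin: "linear L" and r0: "\<rho> \<noteq> 0" and sq: "\<rho>\<^sup>2 = gfun D F (z, w)"
    and L: "\<And>h. L h = ((fst h * \<rho> - z * (gd D F (z, w) h / (2 * \<rho>))) / (\<rho> * \<rho>),
                         (snd h * \<rho> - w * (gd D F (z, w) h / (2 * \<rho>))) / (\<rho> * \<rho>))"
  shows "bij L"
proof -
  have inj: "inj L"
    unfolding linear_injective_0[OF lin]
  proof (intro allI impI)
    fix h assume h0: "L h = 0"
    obtain a b where h: "h = (a, b)" by (cases h)
    define R where "R = gd D F (z, w) (a, b) / (2 * \<rho>)"
    have e1: "a * \<rho> = z * R" and e2: "b * \<rho> = w * R"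
      using h0 r0 unfolding L h R_def by (auto simp: zero_prod_def)
    have "gd D F (z, w) (a, b) * \<rho> = gd D F (z, w) (a * \<rho>, b * \<rho>)"
      using gd_scale[of D F "(z,w)" \<rho> a b] by (simp add: mult.commute)
    also have "\<dots> = R * gd D F (z, w) (z, w)"
      unfolding e1 e2 using gd_scale[of D F "(z,w)" R z w] by (simp add: mult.commute)
    also have "\<dots> = R * 2 * (\<rho>\<^sup>2 - K0 D)" unfolding euler sq by simp
    finally have "2 * \<rho> * R * \<rho> = R * 2 * (\<rho>\<^sup>2 - K0 D)"
      unfolding R_def using r0 by simp
    then have "R * K0 D = 0" by (simp add: algebra_simps power2_eq_square)
    then have "R = 0" using K0_nz[OF hD hF1 hF2] by simp
    then show "h = 0" using e1 e2 r0 h by (simp add: zero_prod_def)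
  qed
  moreover have "surj L" using linear_injective_imp_surjective[OF lin inj] by simp
  ultimately show ?thesis by (rule bijI)
qed




lemma part2:
  fixes D F :: real
    and r :: "complex \<times> complex \<Rightarrow> complex" and S :: "(complex \<times> complex) set"
    and U :: "complex \<times> complex \<Rightarrow> complex" and T :: "(complex \<times> complex) set"
  assumes hD: "D \<noteq> -1" and hF1: "F \<noteq> 1" and hF2: "F \<noteq> 1/2"
    and r_holo: "holo2c_on r S" and r_0: "(0, 0) \<in> S"
    and r_sqrt: "\<forall>p\<in>S. (r p)\<^sup>2 = gfun D F p"
    and U_holo: "holo2c_on U T" and U_0: "(0, 0) \<in> T"
    and U_branch: "\<forall>q\<in>T. (U q)\<^sup>2 * hfun D F q = 1"
    and U_r: "U (0, 0) = 2 * r (0, 0)"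
  shows "\<exists>N. local_analytic_coord_change (Psi r) N (0, 0) \<and> Psi r ` N \<subseteq> T \<and>
          (\<forall>p\<in>N. fst p \<noteq> 0 \<longrightarrow>
             (\<exists>\<Psi>'. (Psi r has_derivative \<Psi>') (at p) \<and> bij \<Psi>' \<and>
                    inv \<Psi>' (Xa F U (Psi r p)) = Xbar D F p)) \<and>
          (F \<noteq> 0 \<longrightarrow> (\<forall>p\<in>N. fst p \<noteq> 0 \<longrightarrow> Ifun F (Psi r p) = Ibar D F p))"
proof -
  obtain A where oA: "open A" and A0: "(0,0) \<in> A" and AS: "A \<subseteq> S"
    and Ap: "\<And>p. p \<in> A \<Longrightarrow> r p \<noteq> 0 \<and> Psi r p \<in> T \<and> U (Psi r p) = 2 * r p"
    using A_set[OF assms] by blast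
  obtain B where oB: "open B" and B0: "(0,0) \<in> B" and BT: "B \<subseteq> T"
    and Bp: "\<And>q. q \<in> B \<Longrightarrow> U q \<noteq> 0 \<and> (fst q * U q / 2, snd q * U q / 2) \<in> S \<and> r (fst q * U q / 2, snd q * U q / 2) = U q / 2"
    using B_set[OF assms] by blast
  define Phi where "Phi = (\<lambda>q::complex\<times>complex. (fst q * U q / 2, snd q * U q / 2))"
  have oS: "open S" and oT: "open T" using r_holo U_holo by (auto simp: holo2c_on_def)
  have cr: "continuous_on S r" by (rule holo_cont[OF r_holo])
  have cU: "continuous_on T U" by (rule holo_cont[OF U_holo])
  have cPsi: "continuous_on A (Psi r)" unfolding Psi_eq
    using Ap by (auto intro!: continuous_intros continuous_on_subset[OF cr AS])
  have cPhi: "continuous_on B Phi" unfolding Phi_def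
    by (auto intro!: continuous_intros continuous_on_subset[OF cU BT])
  define N where "N = Psi r -` B \<inter> A"
  define M where "M = Phi -` A \<inter> B"
  have oN: "open N" using cPsi oB unfolding N_def continuous_on_open_vimage[OF oA] by auto
  have oM: "open M" using cPhi oA unfolding M_def continuous_on_open_vimage[OF oB] by auto
  have P0: "Psi r (0,0) = (0,0)" by (simp add: Psi_def)
  have N0: "(0,0) \<in> N" using A0 B0 P0 by (simp add: N_def)
  have left: "Phi (Psi r p) = p" if "p \<in> A" for p
  proof -
    obtain z w where p: "p = (z, w)" by (cases p)
    have "r p \<noteq> 0" "U (Psi r p) = 2 * r p" using Ap[OF that] by auto
    then show ?thesis unfolding Phi_def using p by (simp add: Psi_def)
  qed
  have right: "Psi r (Phi q) = q" if "q \<in> B" for q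
  proof -
    have U0: "U q \<noteq> 0" and e: "r (Phi q) = U q / 2" using Bp[OF that] unfolding Phi_def by auto
    show ?thesis unfolding Psi_eq e using U0 by (simp add: Phi_def prod_eq_iff)
  qed
  have img: "Psi r ` N = M"
  proof
    show "Psi r ` N \<subseteq> M"
    proof
      fix q assume "q \<in> Psi r ` N"
      then obtain p where p: "p \<in> N" "q = Psi r p" by blast
      then have "Phi q = p" using left by (auto simp: N_def)
      then show "q \<in> M" using p by (auto simp: N_def M_def)
    qed
    show "M \<subseteq> Psi r ` N"
    proof
      fix q assume q: "q \<in> M"
      then have "Phi q \<in> N" using right by (auto simp: N_def M_def)
      moreover have "q = Psi r (Phi q)" using right q by (auto simp: M_def)
      ultimately show "q \<in> Psi r ` N" by blast
    qed
  qed
  have injN: "inj_on (Psi r) N" 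
    using inj_on_inverseI[of N Phi "Psi r"] left by (auto simp: N_def)
  have invM: "inv_into N (Psi r) q = Phi q" if qM: "q \<in> M" for q
  proof -
    obtain p where p: "p \<in> N" "q = Psi r p" using qM img by blast
    then show ?thesis using inv_into_f_f[OF injN p(1)] left by (auto simp: N_def)
  qed
  have holoPsi: "holo2_on (Psi r) N"
    unfolding holo2_on_def
  proof (intro conjI oN ballI)
    fix p assume pN: "p \<in> N"
    then have pS: "p \<in> S" and rp: "r p \<noteq> 0" using AS Ap by (auto simp: N_def)
    obtain r' where dr: "(r has_derivative r') (at p)" and lr: "\<forall>c v. r' (cscale c v) = c * r' v"
      using r_holo pS unfolding holo2c_on_def by blast
    show "\<exists>f'. (Psi r has_derivative f') (at p) \<and> (\<forall>c v. f' (cscale c v) = cscale c (f' v))"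
      using Psi_deriv[OF dr rp] lr rp by (intro exI conjI) (auto simp: cscale_def field_simps)
  qed
  have holoInv: "holo2_on (inv_into N (Psi r)) (Psi r ` N)"
    unfolding holo2_on_def img
  proof (intro conjI oM ballI)
    fix q assume qM: "q \<in> M"
    then have qT: "q \<in> T" using BT by (auto simp: M_def)
    obtain U' where dU: "(U has_derivative U') (at q)" and lU: "\<forall>c v. U' (cscale c v) = c * U' v"
      using U_holo qT unfolding holo2c_on_def by blast
    have d: "(inv_into N (Psi r) has_derivative (\<lambda>h. ((fst h * U q + fst q * U' h) / 2, (snd h * U q + snd q * U' h) / 2))) (at q)"
      by (rule has_derivative_transform_within_open[OF Phi_deriv[OF dU, folded Phi_def] oM qM])
         (simp add: invM)
    show "\<exists>f'. (inv_into N (Psi r) has_derivative f') (at q) \<and> (\<forall>c v. f' (cscale c v) = cscale c (f' v))"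
      using d lU by (intro exI conjI) (auto simp: cscale_def field_simps)
  qed
  have lac: "local_analytic_coord_change (Psi r) N (0, 0)"
    unfolding local_analytic_coord_change_def
    using oN N0 holoPsi injN oM img holoInv by simp
  have sub: "Psi r ` N \<subseteq> T" using img BT by (auto simp: M_def)
  have pull: "\<exists>\<Psi>'. (Psi r has_derivative \<Psi>') (at p) \<and> bij \<Psi>' \<and> inv \<Psi>' (Xa F U (Psi r p)) = Xbar D F p"
    if pN: "p \<in> N" and z0: "fst p \<noteq> 0" for p
  proof -
    obtain z w where p: "p = (z, w)" by (cases p)
    have pS: "p \<in> S" and rp: "r p \<noteq> 0" and UP: "U (Psi r p) = 2 * r p" using pN AS Ap by (auto simp: N_def)
    obtain r' where dr: "(r has_derivative r') (at p)"
      using r_holo pS unfolding holo2c_on_def by blast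
    define \<rho> where "\<rho> = r p"
    have sq: "\<rho>\<^sup>2 = gfun D F (z, w)" using r_sqrt pS p by (simp add: \<rho>_def)
    have r'e: "r' h = gd D F (z, w) h / (2 * \<rho>)" for h
      using r_deriv_id[OF oS pS r_sqrt dr rp] p by (simp add: \<rho>_def)
    define L where "L = (\<lambda>h. ((fst h * r p - fst p * r' h) / (r p * r p), (snd h * r p - snd p * r' h) / (r p * r p)))"
    have dL: "(Psi r has_derivative L) (at p)" unfolding L_def by (rule Psi_deriv[OF dr rp])
    have Le: "L h = ((fst h * \<rho> - z * (gd D F (z, w) h / (2 * \<rho>))) / (\<rho> * \<rho>),
                         (snd h * \<rho> - w * (gd D F (z, w) h / (2 * \<rho>))) / (\<rho> * \<rho>))" for h
      unfolding L_def r'e using p by (simp add: \<rho>_def)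
    have linL: "linear L" using has_derivative_bounded_linear[OF dL] bounded_linear.linear by blast
    have bL: "bij L" by (rule bij_lem[OF hD hF1 hF2 linL rp[folded \<rho>_def] sq Le])
    have zz: "z \<noteq> 0" using z0 p by simp
    define Aa where "Aa = of_real F + (of_real D + 1) * z\<^sup>2 - (2 * of_real D + 1) * z * w + of_real D * w\<^sup>2"
    have Xb: "Xbar D F p = (Aa, w * (Aa - 1) / z)" unfolding p Aa_def by (rule Xbar_eq[OF zz])
    define G where "G = gd D F (z, w) (Aa, w * (Aa - 1) / z)"
    have K: "z * G = 2 * \<rho>\<^sup>2 * Aa - z\<^sup>2 - 2 * of_real F * \<rho>\<^sup>2"
      unfolding G_def sq by (rule key[OF hD hF1 hF2 zz Aa_def])
    have Pp: "Psi r p = (z / \<rho>, w / \<rho>)" by (simp add: Psi_def p \<rho>_def)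
    have UP': "U (z / \<rho>, w / \<rho>) = 2 * \<rho>" using UP Pp by (simp add: \<rho>_def)
    have "L (Xbar D F p) = Xa F U (Psi r p)"
      unfolding Xb Le Pp Xa_def prod.case UP' G_def[symmetric] fst_conv snd_conv
      using pull_alg[OF zz rp[folded \<rho>_def] K] by simp
    then have "inv L (Xa F U (Psi r p)) = Xbar D F p"
      using inv_f_f[OF bij_is_inj[OF bL]] by metis
    with dL bL show ?thesis by blast
  qed
  have Ieq: "Ifun F (Psi r p) = Ibar D F p" if pN: "p \<in> N" and z0: "fst p \<noteq> 0" for p
  proof -
    obtain z w where p: "p = (z, w)" by (cases p)
    have pS: "p \<in> S" and rp: "r p \<noteq> 0" using pN AS Ap by (auto simp: N_def)
    have sq: "(r p)\<^sup>2 = gfun D F (z, w)" using r_sqrt pS p by simp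
    have zz: "z \<noteq> 0" using z0 p by simp
    have e1: "(w / r (z, w)) / (z / r (z, w)) = w / z" using rp p by simp
    have e2: "2 * of_real F / (z / r (z, w))\<^sup>2 = 2 * of_real F * gfun D F (z, w) / z\<^sup>2"
      unfolding sq[symmetric] using rp p by (simp add: power_divide)
    show ?thesis unfolding p Psi_def Ifun_def Ibar_def prod.case e1 e2 ..
  qed
  show ?thesis using lac sub pull Ieq by blast
qed


theorem mainTheorem3:
  fixes D F :: real
    and r :: "complex \<times> complex \<Rightarrow> complex" and S :: "(complex \<times> complex) set"
    and U :: "complex \<times> complex \<Rightarrow> complex" and T :: "(complex \<times> complex) set"
  assumes hD: "D \<noteq> -1" and hF1: "F \<noteq> 1" and hF2: "F \<noteq> 1/2"
    and r_holo: "holo2c_on r S" and r_0: "(0, 0) \<in> S"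
    and r_sqrt: "\<forall>p\<in>S. (r p)\<^sup>2 = gfun D F p"
    and U_holo: "holo2c_on U T" and U_0: "(0, 0) \<in> T"
    and U_branch: "\<forall>q\<in>T. (U q)\<^sup>2 * hfun D F q = 1"
    and U_r: "U (0, 0) = 2 * r (0, 0)"
  shows
    "(\<forall>u v. v \<noteq> 0 \<longrightarrow>
        (\<exists>\<phi>'. (proj_chart has_derivative \<phi>') (at (u, v)) \<and>
              \<phi>' (- La D F (u, v)) = Xbar D F (proj_chart (u, v))))
     \<and> (\<exists>N. local_analytic_coord_change (Psi r) N (0, 0) \<and> Psi r ` N \<subseteq> T \<and>
          (\<forall>p\<in>N. fst p \<noteq> 0 \<longrightarrow>
             (\<exists>\<Psi>'. (Psi r has_derivative \<Psi>') (at p) \<and> bij \<Psi>' \<and>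
                    inv \<Psi>' (Xa F U (Psi r p)) = Xbar D F p)) \<and>
          (F \<noteq> 0 \<longrightarrow> (\<forall>p\<in>N. fst p \<noteq> 0 \<longrightarrow> Ifun F (Psi r p) = Ibar D F p)))
     \<and> (let \<mu> = (2::nat); \<epsilon> = - 2 * complex_of_real F in
          \<forall>V x y. Xa F V (x, y) =
            (1 / (x * V (x, y)) * (x * (x ^ \<mu> - \<epsilon>)),
             1 / (x * V (x, y)) * (- (Va F x * y))))
     \<and> (F \<noteq> 0 \<longrightarrow>
          first_integral_on (Ibar D F) (Xbar D F)
            {p. fst p \<noteq> 0 \<and>
                (1 + 2 * of_real F * gfun D F p / (fst p)\<^sup>2) \<notin> {t. t \<in> \<real> \<and> Re t \<le> 0}})"
  proof -
  have p1: "\<forall>u v. v \<noteq> 0 \<longrightarrow>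
        (\<exists>\<phi>'. (proj_chart has_derivative \<phi>') (at (u, v)) \<and>
              \<phi>' (- La D F (u, v)) = Xbar D F (proj_chart (u, v)))"
    using part1 by blast
  show ?thesis
    using p1 part2[OF assms] part3[of F] part4[OF hD hF1 hF2] by blast
qed

end
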